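(* Let $Q_t(x)=1+t(e^x-1)$. For every integer $k\geq1$, the coefficient of $x^{k-1}$ in the formal power series $Q_t'(x)/Q_t(x)$ (equivalently $\frac{1}{2\pi\sqrt{-1}}\oint\frac{Q_t'(x)}{x^kQ_t(x)}dx$) equals $$t\sum_{i=0}^{k-1}\frac{S(k,k-i)}{\binom{k-1}{i}\cdot i!}(-t)^{k-1-i}.$$
   Context: $S(n,m)$ is the Stirling number of the second kind (number of partitions of $\{1,\ldots,n\}$ into exactly $m$ nonempty blocks), with $S(n,m)=0$ for $m>n$, $S(n,0)=0$ for $n>0$, $S(0,0)=1$. *)

theory Defs
  imports "HOL-Combinatorics.Stirling" "HOL-Computational_Algebra.Formal_Power_Series"
begin

definition Q_fps :: "'a::field_char_0 \<Rightarrow> 'a fps" where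
  "Q_fps t = 1 + fps_const t * (fps_exp 1 - 1)"

end

theory Submission
  imports Defs
begin
unbundle fps_syntax

lemma Epow_nth:
  "((fps_exp (1::'a::field_char_0) - 1) ^ m) $ n = fact m * of_nat (Stirling n m) / fact n"
proof (induction n arbitrary: m)
  case 0
  then show ?case by (cases m) auto
next
  case (Suc n)
  define E where "E = (fps_exp (1::'a) - 1)"
  show ?case
  proof (cases m)
    case 0
    then show ?thesis by simp
  next
    case (Suc j)
    have dE: "fps_deriv E = E + 1" unfolding E_def by simp
    have "fps_deriv (E ^ Suc j) = of_nat (Suc j) * (E + 1) * E ^ j"
      by (subst fps_deriv_power') (simp add: dE)
    also have "\<dots> = of_nat (Suc j) * (E ^ Suc j + E ^ j)"
      by (simp add: algebra_simps)
    finally have "fps_deriv (E ^ Suc j) $ n = of_nat (Suc j) * ((E ^ Suc j) $ n + (E ^ j) $ n)"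
      by (simp add: fps_of_nat[symmetric])
    hence "of_nat (n + 1) * (E ^ Suc j) $ (n + 1) = of_nat (Suc j) * ((E ^ Suc j) $ n + (E ^ j) $ n)"
      by (simp only: fps_deriv_nth)
    hence "of_nat (Suc n) * (E ^ Suc j) $ Suc n = of_nat (Suc j) * ((E ^ Suc j) $ n + (E ^ j) $ n)"
      by (simp only: Suc_eq_plus1)
    note d = this
    have h1: "(E^Suc j)$n = fact (Suc j) * of_nat (Stirling n (Suc j)) / fact n"
      using Suc.IH[of "Suc j"] unfolding E_def .
    have h2: "(E^j)$n = fact j * of_nat (Stirling n j) / fact n"
      using Suc.IH[of j] unfolding E_def .
    have "of_nat (Suc n) * (E ^ Suc j) $ Suc n = of_nat (Suc j) * (fact (Suc j) * of_nat (Stirling n (Suc j)) / fact n + fact j * of_nat (Stirling n j) / fact n)"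
      using d unfolding h1 h2 .
    hence "(E ^ Suc j) $ Suc n = of_nat (Suc j) * (fact (Suc j) * of_nat (Stirling n (Suc j)) + fact j * of_nat (Stirling n j)) / fact (Suc n)"
      by (simp add: field_simps del: of_nat_Suc)
    also have "\<dots> = fact (Suc j) * of_nat (Stirling (Suc n) (Suc j)) / fact (Suc n)"
      by (simp add: field_simps)
    finally show ?thesis unfolding E_def Suc by simp
  qed
qed

lemma term_eq:
  fixes t s :: "'a::field_char_0"
  assumes "q \<le> p"
  shows "of_nat (Suc p) * ((-1) ^ q * t ^ Suc q / of_nat (Suc q) * (fact (Suc q) * s / fact (Suc p)))
    = t * (s / (of_nat (p choose (p - q)) * fact (p - q)) * (- t) ^ q)"
proof -
  have b: "(of_nat (p choose (p - q)) :: 'a) = fact p / (fact (p - q) * fact q)"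
    using binomial_fact[of "p - q" p] assms by simp
  have h1: "(fact (Suc p) :: 'a) = of_nat (Suc p) * fact p" by (simp del: of_nat_Suc)
  have h2: "(fact (Suc q) :: 'a) = of_nat (Suc q) * fact q" by (simp del: of_nat_Suc)
  have n1: "(of_nat (Suc p) :: 'a) \<noteq> 0" "(of_nat (Suc q) :: 'a) \<noteq> 0" by (simp_all del: of_nat_Suc)
  show ?thesis unfolding b h1 h2 using n1
    by (simp add: field_simps power_minus[of t] del: of_nat_Suc fact_Suc)
qed

theorem lemma4p3:
  fixes t :: "'a::field_char_0" and k :: nat
  assumes "k \<ge> 1"
  shows "fps_nth (fps_deriv (Q_fps t) / Q_fps t) (k - 1) =
    t * (\<Sum>i = 0..k-1. of_nat (Stirling k (k - i)) / (of_nat ((k - 1) choose i) * fact i)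
          * (- t) ^ (k - 1 - i))"
proof -
  define c where "c = fps_const t"
  define E where "E = fps_exp (1::'a) - 1"
  define D where "D = 1 + c * fps_X"
  define H where "H = Abs_fps (\<lambda>m. if m = 0 then 0 else (-1) ^ (m - 1) * t ^ m / (of_nat m :: 'a))"
  define H' where "H' = Abs_fps (\<lambda>n. t * (-t) ^ n)"
  have E0: "E $ 0 = 0" unfolding E_def by simp
  have QD: "Q_fps t = D oo E"
    unfolding Q_fps_def D_def c_def E_def[symmetric]
    by (simp add: fps_compose_add_distrib fps_compose_mult_distrib[OF E0] E0)
  have dH: "fps_deriv H = H'"
    unfolding H_def H'_def by (simp add: fps_eq_iff del: of_nat_Suc) (simp add: field_simps power_minus[of t])
  have DH: "D * H' = c"
  proof -
    have "D * H' = H' + c * (fps_X * H')" unfolding D_def by (simp add: algebra_simps)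
    also have "\<dots> = c"
      unfolding c_def H'_def
      apply (simp add: fps_eq_iff)
      apply (intro allI impI)
      apply (case_tac n)
       apply auto
      done
    finally show ?thesis .
  qed
  have dHE: "fps_deriv (H oo E) = (H' oo E) * fps_deriv E"
    using fps_compose_deriv[OF E0, of H] dH by simp
  have dQ: "fps_deriv (Q_fps t) = c * fps_deriv E"
    unfolding Q_fps_def c_def E_def by simp
  have "Q_fps t * fps_deriv (H oo E) = ((D * H') oo E) * fps_deriv E"
    unfolding QD dHE fps_compose_mult_distrib[OF E0] by (simp add: mult.assoc)
  also have "\<dots> = fps_deriv (Q_fps t)" unfolding DH dQ c_def by simp
  finally have eq: "Q_fps t * fps_deriv (H oo E) = fps_deriv (Q_fps t)" .
  have Q0: "Q_fps t \<noteq> 0"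
  proof
    assume "Q_fps t = 0"
    hence "Q_fps t $ 0 = 0" by simp
    thus False unfolding Q_fps_def by simp
  qed
  have "fps_deriv (Q_fps t) / Q_fps t = fps_deriv (H oo E)"
    unfolding eq[symmetric] using Q0 by simp
  then have L: "fps_nth (fps_deriv (Q_fps t) / Q_fps t) (k - 1) = of_nat k * (H oo E) $ k"
    using assms by simp
  obtain p where kp: "k = Suc p" using assms by (cases k) auto
  have "(H oo E) $ k = (\<Sum>m = 0..k. H $ m * (E ^ m) $ k)" by (rule fps_compose_nth)
  also have "\<dots> = (\<Sum>q = 0..p. H $ Suc q * (E ^ Suc q) $ k)"
    unfolding kp by (subst sum.atLeast0_atMost_Suc_shift) (simp add: H_def)
  also have "\<dots> = (\<Sum>q = 0..p. (-1) ^ q * t ^ Suc q / of_nat (Suc q) * (fact (Suc q) * of_nat (Stirling (Suc p) (Suc q)) / fact (Suc p)))"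
  proof (rule sum.cong)
    fix q
    have "H $ Suc q = (-1) ^ q * t ^ Suc q / of_nat (Suc q)" unfolding H_def by simp
    moreover have "(E ^ Suc q) $ k = fact (Suc q) * of_nat (Stirling (Suc p) (Suc q)) / fact (Suc p)"
      unfolding E_def kp by (rule Epow_nth)
    ultimately show "H $ Suc q * (E ^ Suc q) $ k = (-1) ^ q * t ^ Suc q / of_nat (Suc q) * (fact (Suc q) * of_nat (Stirling (Suc p) (Suc q)) / fact (Suc p))"
      by simp
  qed simp
  finally have "of_nat k * (H oo E) $ k = (\<Sum>q = 0..p. of_nat (Suc p) * ((-1) ^ q * t ^ Suc q / of_nat (Suc q) * (fact (Suc q) * of_nat (Stirling (Suc p) (Suc q)) / fact (Suc p))))"
    unfolding kp by (simp only: sum_distrib_left)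
  also have "\<dots> = (\<Sum>q = 0..p. t * (of_nat (Stirling (Suc p) (Suc p - (p - q))) / (of_nat (p choose (p - q)) * fact (p - q)) * (- t) ^ (p - (p - q))))"
  proof (rule sum.cong)
    fix q assume "q \<in> {0..p}"
    hence qp: "q \<le> p" by simp
    have a: "Suc p - (p - q) = Suc q" "p - (p - q) = q" using qp by auto
    show "of_nat (Suc p) * ((-1) ^ q * t ^ Suc q / of_nat (Suc q) * (fact (Suc q) * of_nat (Stirling (Suc p) (Suc q)) / fact (Suc p)))
      = t * (of_nat (Stirling (Suc p) (Suc p - (p - q))) / (of_nat (p choose (p - q)) * fact (p - q)) * (- t) ^ (p - (p - q)))"
      unfolding a by (rule term_eq[OF qp])
  qed simp
  also have "\<dots> = t * (\<Sum>i = 0..p. of_nat (Stirling (Suc p) (Suc p - i)) / (of_nat (p choose i) * fact i) * (- t) ^ (p - i))"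
    by (subst sum.atLeastAtMost_rev) (simp add: sum_distrib_left)
  finally have R: "of_nat k * (H oo E) $ k = t * (\<Sum>i = 0..p. of_nat (Stirling (Suc p) (Suc p - i)) / (of_nat (p choose i) * fact i) * (- t) ^ (p - i))" .
  show ?thesis unfolding L using R unfolding kp by simp
qed

end
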